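(* Let $f$ be a light complex-valued harmonic function in $\mathbb{C}$. Let $R$ be a bounded connected component of $\mathbb{C}\setminus f^{-1}(f(S)\cup C(f,\infty))$ and let $\Omega$ be the connected component of $\mathbb{C}\setminus(f(S)\cup C(f,\infty))$ with $f(R)=\Omega$. Suppose that $w_0$ is an isolated point of $\partial\Omega$. If $f^{-1}(w_0)\cap\partial R\cap S=\varnothing$, then $w_0$ has exactly $\mathrm{Val}(f|_R,\Omega)$ distinct preimages in $\partial R$, and these preimages are isolated points of $\partial R$.
   Context: A function is light if the preimage of each point is empty or totally disconnected. Writing $f=u+iv$, $J_f=u_xv_y-u_yv_x$ and $S=\{z: J_f(z)=0\}$. $C(f,\infty)$ is the set of finite points $\zeta$ for which there is a sequence $(z_n)$ with $|z_n|\to\infty$ and $f(z_n)\to\zeta$. $\mathrm{Val}(f|_R,\Omega)=\sup_{w\in\Omega}\#\{z\in R: f(z)=w\}$. *)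

theory Defs
  imports "HOL-Analysis.Analysis" "HOL-Library.Extended_Nat"
begin

definition pdx :: "(complex \<Rightarrow> real) \<Rightarrow> complex \<Rightarrow> real" where
  "pdx u z = deriv (\<lambda>t::real. u (z + of_real t)) 0"

definition pdy :: "(complex \<Rightarrow> real) \<Rightarrow> complex \<Rightarrow> real" where
  "pdy u z = deriv (\<lambda>t::real. u (z + \<i> * of_real t)) 0"

definition harmonic_real :: "(complex \<Rightarrow> real) \<Rightarrow> bool" where
  "harmonic_real u \<longleftrightarrow>
     (\<forall>z. u differentiable (at z)) \<and>
     (\<forall>z. pdx u differentiable (at z)) \<and>
     (\<forall>z. pdy u differentiable (at z)) \<and>
     continuous_on UNIV (pdx (pdx u)) \<and> continuous_on UNIV (pdy (pdx u)) \<and>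
     continuous_on UNIV (pdx (pdy u)) \<and> continuous_on UNIV (pdy (pdy u)) \<and>
     (\<forall>z. pdx (pdx u) z + pdy (pdy u) z = 0)"

definition harmonic_complex :: "(complex \<Rightarrow> complex) \<Rightarrow> bool" where
  "harmonic_complex f \<longleftrightarrow> harmonic_real (\<lambda>z. Re (f z)) \<and> harmonic_real (\<lambda>z. Im (f z))"

definition totally_disconnected :: "'a::topological_space set \<Rightarrow> bool" where
  "totally_disconnected A \<longleftrightarrow> (\<forall>C. C \<subseteq> A \<and> connected C \<longrightarrow> (\<exists>a. C \<subseteq> {a}))"

definition light :: "('a::topological_space \<Rightarrow> 'b) \<Rightarrow> bool" where
  "light f \<longleftrightarrow> (\<forall>w. f -` {w} = {} \<or> totally_disconnected (f -` {w}))"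

definition jacobian :: "(complex \<Rightarrow> complex) \<Rightarrow> complex \<Rightarrow> real" where
  "jacobian f z = pdx (\<lambda>z. Re (f z)) z * pdy (\<lambda>z. Im (f z)) z
                - pdy (\<lambda>z. Re (f z)) z * pdx (\<lambda>z. Im (f z)) z"

definition critset :: "(complex \<Rightarrow> complex) \<Rightarrow> complex set" where
  "critset f = {z. jacobian f z = 0}"

definition cluster_inf :: "(complex \<Rightarrow> complex) \<Rightarrow> complex set" where
  "cluster_inf f = {\<zeta>. \<exists>zs::nat \<Rightarrow> complex.
      filterlim (\<lambda>n. norm (zs n)) at_top sequentially \<and> (\<lambda>n. f (zs n)) \<longlonglongrightarrow> \<zeta>}"

definition ecount :: "'a set \<Rightarrow> enat" where
  "ecount A = (if finite A then enat (card A) else \<infinity>)"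

definition Val :: "('a \<Rightarrow> 'b) \<Rightarrow> 'a set \<Rightarrow> 'b set \<Rightarrow> enat" where
  "Val f R \<Omega> = (SUP w\<in>\<Omega>. ecount {z\<in>R. f z = w})"

end

theory Submission
  imports Defs "HOL-Homology.Invariance_of_Domain"
begin


lemma pd_deriv:
  fixes u :: "complex \<Rightarrow> real"
  assumes "u differentiable (at z)"
  shows "(u has_derivative (\<lambda>h. Re h * pdx u z + Im h * pdy u z)) (at z)"
proof -
  obtain D where D: "(u has_derivative D) (at z)" using assms unfolding differentiable_def by blast
  then have lin: "linear D" using has_derivative_linear by blast
  have sc: "D (of_real t * c) = t * D c" for t c
    using linear_scale[OF lin, of t c] by (simp add: scaleR_conv_of_real)
  have h1: "((\<lambda>t::real. u (z + of_real t)) has_real_derivative D 1) (at 0)"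
  proof -
    have "((\<lambda>t::real. z + of_real t) has_derivative (\<lambda>t. of_real t)) (at 0)"
      by (auto intro!: derivative_eq_intros)
    from has_derivative_compose[OF this, of u D] D
    have "((\<lambda>t::real. u (z + of_real t)) has_derivative (\<lambda>t. D (of_real t))) (at 0)"
      by (simp add: o_def)
    moreover have "(\<lambda>t. D (of_real t)) = (\<lambda>t. t * D 1)" using sc[of _ 1] by simp
    moreover have "(\<lambda>t. t * D 1) = (*) (D 1)" by (auto simp: fun_eq_iff)
    ultimately show ?thesis by (simp add: has_field_derivative_def)
  qed
  have h2: "((\<lambda>t::real. u (z + \<i> * of_real t)) has_real_derivative D \<i>) (at 0)"
  proof -
    have "((\<lambda>t::real. z + \<i> * of_real t) has_derivative (\<lambda>t. \<i> * of_real t)) (at 0)"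
      by (auto intro!: derivative_eq_intros)
    from has_derivative_compose[OF this, of u D] D
    have "((\<lambda>t::real. u (z + \<i> * of_real t)) has_derivative (\<lambda>t. D (\<i> * of_real t))) (at 0)"
      by (simp add: o_def)
    moreover have "(\<lambda>t. D (\<i> * of_real t)) = (\<lambda>t. t * D \<i>)" using sc[of _ \<i>] by (simp add: mult.commute)
    moreover have "(\<lambda>t. t * D \<i>) = (*) (D \<i>)" by (auto simp: fun_eq_iff)
    ultimately show ?thesis by (simp add: has_field_derivative_def)
  qed
  have "pdx u z = D 1" unfolding pdx_def using h1 DERIV_imp_deriv by blast
  moreover have "pdy u z = D \<i>" unfolding pdy_def using h2 DERIV_imp_deriv by blast
  moreover have "D h = Re h * D 1 + Im h * D \<i>" for h
  proof -
    have "h = of_real (Re h) * 1 + of_real (Im h) * \<i>" by (simp add: complex_eq_iff)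
    then have "D h = D (of_real (Re h) * 1) + D (of_real (Im h) * \<i>)"
      by (metis linear_add[OF lin])
    then show ?thesis using sc[of "Re h" 1] sc[of "Im h" \<i>] by simp
  qed
  ultimately show ?thesis using D by (metis (no_types, lifting) ext)
qed

lemma harm_diff:
  assumes "harmonic_complex f"
  shows "\<And>z. (\<lambda>z. Re (f z)) differentiable (at z)" "\<And>z. (\<lambda>z. Im (f z)) differentiable (at z)"
    "\<And>z. pdx (\<lambda>z. Re (f z)) differentiable (at z)" "\<And>z. pdy (\<lambda>z. Re (f z)) differentiable (at z)"
    "\<And>z. pdx (\<lambda>z. Im (f z)) differentiable (at z)" "\<And>z. pdy (\<lambda>z. Im (f z)) differentiable (at z)"
  using assms unfolding harmonic_complex_def harmonic_real_def by auto

lemma complex_deriv_from_parts: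
  fixes f :: "complex \<Rightarrow> complex"
  assumes "(\<lambda>z. Re (f z)) differentiable (at x)" "(\<lambda>z. Im (f z)) differentiable (at x)"
  shows "(f has_derivative (\<lambda>h. Complex (Re h * pdx (\<lambda>z. Re (f z)) x + Im h * pdy (\<lambda>z. Re (f z)) x)
                                     (Re h * pdx (\<lambda>z. Im (f z)) x + Im h * pdy (\<lambda>z. Im (f z)) x))) (at x)"
proof -
  note d1 = pd_deriv[OF assms(1)] and d2 = pd_deriv[OF assms(2)]
  show ?thesis
    apply (subst has_derivative_componentwise_within)
    using d1 d2 by (auto simp: Basis_complex_def)
qed

lemma harm_cont:
  assumes "harmonic_complex f"
  shows "continuous_on UNIV f"
proof -
  have "f differentiable (at x)" for x
    using complex_deriv_from_parts[OF harm_diff(1,2)[OF assms]] unfolding differentiable_def by blast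
  then show ?thesis by (simp add: continuous_at_imp_continuous_on differentiable_imp_continuous_within)
qed

lemma norm_Complex_lin:
  "norm (Complex (Re v * a + Im v * b) (Re v * c + Im v * d)) \<le> (\<bar>a\<bar> + \<bar>b\<bar> + \<bar>c\<bar> + \<bar>d\<bar>) * norm v"
proof -
  have r: "\<bar>Re v\<bar> \<le> norm v" "\<bar>Im v\<bar> \<le> norm v" by (simp_all add: abs_Re_le_cmod abs_Im_le_cmod)
  have "norm (Complex (Re v * a + Im v * b) (Re v * c + Im v * d)) \<le> \<bar>Re v * a + Im v * b\<bar> + \<bar>Re v * c + Im v * d\<bar>"
    using cmod_le[of "Complex (Re v * a + Im v * b) (Re v * c + Im v * d)"] by simp
  also have "\<dots> \<le> (\<bar>Re v\<bar> * \<bar>a\<bar> + \<bar>Im v\<bar> * \<bar>b\<bar>) + (\<bar>Re v\<bar> * \<bar>c\<bar> + \<bar>Im v\<bar> * \<bar>d\<bar>)"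
    by (intro add_mono) (auto simp: abs_mult intro: order.trans[OF abs_triangle_ineq])
  also have "\<dots> \<le> (norm v * \<bar>a\<bar> + norm v * \<bar>b\<bar>) + (norm v * \<bar>c\<bar> + norm v * \<bar>d\<bar>)"
    using r by (intro add_mono mult_right_mono) auto
  finally show ?thesis by (simp add: algebra_simps)
qed

lemma harm_locinj:
  assumes h: "harmonic_complex f" and J: "jacobian f a \<noteq> 0"
  shows "\<exists>r>0. inj_on f (ball a r)"
proof -
  define p where "p = pdx (\<lambda>z. Re (f z))"
  define q where "q = pdy (\<lambda>z. Re (f z))"
  define r where "r = pdx (\<lambda>z. Im (f z))"
  define s where "s = pdy (\<lambda>z. Im (f z))"
  define F where "F = (\<lambda>x h. Complex (Re h * p x + Im h * q x) (Re h * r x + Im h * s x))"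
  define Ja where "Ja = p a * s a - q a * r a"
  have Ja: "Ja \<noteq> 0" using J unfolding jacobian_def Ja_def p_def q_def r_def s_def by simp
  define g where "g = (\<lambda>w. Complex ((s a * Re w - q a * Im w) / Ja) ((- r a * Re w + p a * Im w) / Ja))"
  have der: "(f has_derivative F x) (at x)" for x
    unfolding F_def p_def q_def r_def s_def
    by (rule complex_deriv_from_parts[OF harm_diff(1,2)[OF h]])
  have "linear g"
    by (rule linearI) (auto simp: g_def complex_eq_iff add_divide_distrib[symmetric] algebra_simps)
  then have bl: "bounded_linear g" using linear_conv_bounded_linear by blast
  have gF: "g \<circ> F a = id"
    using Ja by (auto simp: g_def F_def fun_eq_iff complex_eq_iff field_simps Ja_def)
  have cp: "isCont p x" "isCont q x" "isCont r x" "isCont s x" for x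
    using harm_diff(3-6)[OF h] unfolding p_def q_def r_def s_def
    by (auto intro: differentiable_imp_continuous_within)
  define c where "c = (\<lambda>x. \<bar>p x - p a\<bar> + \<bar>q x - q a\<bar> + \<bar>r x - r a\<bar> + \<bar>s x - s a\<bar>)"
  have cc: "isCont c a" unfolding c_def using cp by (intro continuous_intros) auto
  have on: "onorm (\<lambda>v. F x v - F a v) \<le> c x" for x
  proof (rule onorm_le)
    fix v
    have "F x v - F a v = Complex (Re v * (p x - p a) + Im v * (q x - q a)) (Re v * (r x - r a) + Im v * (s x - s a))"
      by (simp add: F_def complex_eq_iff algebra_simps)
    then show "norm (F x v - F a v) \<le> c x * norm v"
      using norm_Complex_lin by (simp add: c_def)
  qed
  have "\<exists>d>0. \<forall>x. dist a x < d \<longrightarrow> onorm (\<lambda>v. F x v - F a v) < e" if "e > 0" for e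
  proof -
    obtain d where d: "d > 0" "\<And>x. dist x a < d \<Longrightarrow> dist (c x) (c a) < e"
      using cc \<open>e > 0\<close> unfolding continuous_at_eps_delta by blast
    have "c a = 0" by (simp add: c_def)
    have "onorm (\<lambda>v. F x v - F a v) < e" if "dist a x < d" for x
    proof -
      have "dist (c x) (c a) < e" using d(2)[of x] that by (simp only: dist_commute)
      then have "c x < e" using \<open>c a = 0\<close> by (simp add: dist_real_def)
      then show ?thesis using on[of x] by linarith
    qed
    then show ?thesis using d(1) by blast
  qed
  then obtain rr where "rr > 0" "inj_on f (ball a rr)"
    using has_derivative_locally_injective[of a UNIV g F f] bl gF der by auto
  then show ?thesis by blast
qed



lemma count_near:
  fixes f :: "complex \<Rightarrow> complex"
  assumes cont: "continuous_on UNIV f" and K: "compact K" and TK: "T \<subseteq> K"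
    and Y: "Y = f -` {w} \<inter> K"
    and loc: "\<And>y. y \<in> Y \<Longrightarrow> \<exists>r>0. inj_on f (ball y r) \<and> ball y r - {y} \<subseteq> T"
  shows "finite Y \<and> (\<exists>\<delta>>0. \<forall>w'\<in>ball w \<delta> - {w}. finite (f -` {w'} \<inter> T) \<and> card (f -` {w'} \<inter> T) = card Y)"
proof -
  obtain rad where rad: "\<And>y. y \<in> Y \<Longrightarrow> rad y > 0 \<and> inj_on f (ball y (rad y)) \<and> ball y (rad y) - {y} \<subseteq> T"
    using loc by metis
  have cY: "compact Y"
    unfolding Y by (rule closed_Int_compact[OF continuous_closed_vimage[OF closed_singleton] K])
      (use cont continuous_on_eq_continuous_at in blast)
  have iso: "x = y" if "y \<in> Y" "x \<in> Y" "x \<in> ball y (rad y)" for x y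
  proof -
    have "f x = f y" using that Y by auto
    moreover have "y \<in> ball y (rad y)" using rad[OF that(1)] by simp
    ultimately show ?thesis using rad[OF that(1)] that(3) by (meson inj_onD)
  qed
  obtain Fc where Fc: "Fc \<subseteq> Y" "finite Fc" "Y \<subseteq> (\<Union>y\<in>Fc. ball y (rad y))"
  proof (rule compactE_image[OF cY, of Y "\<lambda>y. ball y (rad y)"])
    show "Y \<subseteq> (\<Union>y\<in>Y. ball y (rad y))" using rad by force
  qed auto
  have "Y \<subseteq> Fc"
  proof
    fix x assume "x \<in> Y"
    then obtain y where "y \<in> Fc" "x \<in> ball y (rad y)" using Fc by blast
    then show "x \<in> Fc" using iso[of y x] Fc(1) \<open>x \<in> Y\<close> by auto
  qed
  then have fY: "finite Y" by (rule finite_subset) (rule Fc(2))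
  define D where "D = {1} \<union> rad ` Y \<union> (\<lambda>(y,y'). dist y y' / 2) ` {(y,y'). y \<in> Y \<and> y' \<in> Y \<and> y \<noteq> y'}"
  have fD: "finite D" unfolding D_def
    by (intro finite_UnI finite_imageI) (auto simp: fY intro: finite_subset[OF _ finite_cartesian_product[OF fY fY]])
  have Dpos: "\<forall>x\<in>D. x > 0" unfolding D_def using rad by auto
  define \<rho> where "\<rho> = Min D"
  have \<rho>pos: "\<rho> > 0" unfolding \<rho>_def using fD Dpos by (subst Min_gr_iff) (auto simp: D_def)
  have \<rho>rad: "\<rho> \<le> rad y" if "y \<in> Y" for y
    unfolding \<rho>_def using fD that by (intro Min_le) (auto simp: D_def)
  have \<rho>dist: "\<rho> \<le> dist y y' / 2" if "y \<in> Y" "y' \<in> Y" "y \<noteq> y'" for y y'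
    unfolding \<rho>_def using fD that by (intro Min_le) (auto simp: D_def)
  define V where "V = (\<lambda>y::complex. ball y \<rho>)"
  have Vsub: "V y \<subseteq> ball y (rad y)" if "y \<in> Y" for y
    unfolding V_def using \<rho>rad[OF that] by auto
  have Vdisj: "V y \<inter> V y' = {}" if "y \<in> Y" "y' \<in> Y" "y \<noteq> y'" for y y'
  proof -
    have "dist y y' \<ge> 2 * \<rho>" using \<rho>dist[OF that] by simp
    then show ?thesis unfolding V_def using dist_triangle_half_l[of _ y \<rho> y'] 
      by (auto simp: dist_commute) (smt (verit, best) dist_commute dist_triangle)
  qed
  have injV: "inj_on f (V y)" if "y \<in> Y" for y
    using rad[OF that] Vsub[OF that] inj_on_subset by blast
  have openfV: "open (f ` V y)" if "y \<in> Y" for y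
    by (rule invariance_of_domain) (use cont injV[OF that] continuous_on_subset in \<open>auto simp: V_def\<close>)
  define Oo where "Oo = (\<Inter>y\<in>Y. f ` V y)"
  have "open Oo" unfolding Oo_def using fY openfV by (intro open_INT) auto
  moreover have "w \<in> Oo" unfolding Oo_def V_def using Y \<rho>pos by auto
  ultimately obtain d2 where d2: "d2 > 0" "ball w d2 \<subseteq> Oo" using open_contains_ball by blast
  define Q where "Q = K - (\<Union>y\<in>Y. V y)"
  have "compact Q" unfolding Q_def using K by (intro compact_diff) (auto simp: V_def)
  then have "compact (f ` Q)" using cont compact_continuous_image continuous_on_subset by blast
  then have "closed (f ` Q)" by (rule compact_imp_closed)
  moreover have "w \<notin> f ` Q"
  proof
    assume "w \<in> f ` Q"
    then obtain x where "x \<in> Q" "f x = w" by auto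
    then have "x \<in> Y" using Y Q_def by auto
    then have "x \<in> V x" using \<rho>pos V_def by auto
    then show False using \<open>x \<in> Q\<close> \<open>x \<in> Y\<close> Q_def by auto
  qed
  ultimately obtain d1 where d1: "d1 > 0" "ball w d1 \<subseteq> - f ` Q"
    using open_contains_ball[of "- f ` Q"] by blast
  define \<delta> where "\<delta> = min d1 d2"
  have "\<forall>w'\<in>ball w \<delta> - {w}. finite (f -` {w'} \<inter> T) \<and> card (f -` {w'} \<inter> T) = card Y"
  proof
    fix w' assume w': "w' \<in> ball w \<delta> - {w}"
    define A where "A = f -` {w'} \<inter> T"
    have AU: "A = (\<Union>y\<in>Y. A \<inter> V y)"
    proof -
      have "x \<in> (\<Union>y\<in>Y. V y)" if "x \<in> A" for x
      proof (rule ccontr)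
        assume "x \<notin> (\<Union>y\<in>Y. V y)"
        then have "x \<in> Q" using that TK A_def Q_def by auto
        then have "w' \<in> f ` Q" using that A_def by auto
        moreover have "w' \<in> ball w d1" using w' \<delta>_def by auto
        ultimately show False using d1 by auto
      qed
      then show ?thesis by blast
    qed
    have single: "card (A \<inter> V y) = 1" "finite (A \<inter> V y)" if "y \<in> Y" for y
    proof -
      have "w' \<in> ball w d2" using w' \<delta>_def by auto
      then have "w' \<in> f ` V y" using d2 that Oo_def by auto
      then obtain x where x: "x \<in> V y" "f x = w'" by auto
      have "f y = w" using that Y by auto
      then have "x \<noteq> y" using x w' by auto
      then have "x \<in> T" using x Vsub[OF that] rad[OF that] by auto
      have "A \<inter> V y = {x}"
        using x \<open>x \<in> T\<close> injV[OF that] unfolding A_def by (auto dest: inj_onD)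
      then show "card (A \<inter> V y) = 1" "finite (A \<inter> V y)" by auto
    qed
    have "card A = (\<Sum>y\<in>Y. card (A \<inter> V y))"
      by (subst AU, rule card_UN_disjoint) (use fY single Vdisj in blast)+
    also have "\<dots> = card Y" using single by simp
    finally have "card A = card Y" .
    moreover have "finite A" using AU fY single(2) by (metis finite_UN_I)
    ultimately show "finite (f -` {w'} \<inter> T) \<and> card (f -` {w'} \<inter> T) = card Y"
      unfolding A_def by auto
  qed
  moreover have "\<delta> > 0" using d1 d2 \<delta>_def by auto
  ultimately show ?thesis using fY by blast
qed



lemma cluster_sub:
  fixes f :: "complex \<Rightarrow> complex"
  assumes "\<zeta> \<in> cluster_inf f"
  shows "\<zeta> \<in> closure (f ` {z. n < norm z})"
proof -
  obtain zs where zs: "filterlim (\<lambda>n. norm (zs n)) at_top sequentially" "(\<lambda>n. f (zs n)) \<longlonglongrightarrow> \<zeta>"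
    using assms unfolding cluster_inf_def by blast
  have "eventually (\<lambda>k. n < norm (zs k)) sequentially"
    using zs(1) by (simp add: filterlim_at_top_dense)
  then have "eventually (\<lambda>k. f (zs k) \<in> closure (f ` {z. n < norm z})) sequentially"
    by eventually_elim (auto intro: closure_subset[THEN subsetD])
  then show ?thesis using Lim_in_closed_set[OF closed_closure _ _ zs(2)] by simp
qed

lemma cluster_sup:
  fixes f :: "complex \<Rightarrow> complex"
  assumes "\<And>n::nat. \<zeta> \<in> closure (f ` {z. real n < norm z})"
  shows "\<zeta> \<in> cluster_inf f"
proof -
  have "\<exists>z. real n < norm z \<and> dist (f z) \<zeta> < inverse (real n + 1)" for n
  proof -
    have "inverse (real n + 1) > 0" by simp
    then obtain y where "y \<in> f ` {z. real n < norm z}" "dist y \<zeta> < inverse (real n + 1)"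
      using assms[of n] unfolding closure_approachable by blast
    then show ?thesis by auto
  qed
  then obtain zs where zs: "\<And>n. real n < norm (zs n) \<and> dist (f (zs n)) \<zeta> < inverse (real n + 1)"
    by metis
  have "filterlim (\<lambda>n. norm (zs n)) at_top sequentially"
  proof (rule filterlim_at_top_mono[OF filterlim_real_sequentially])
    show "\<forall>\<^sub>F x in sequentially. real x \<le> norm (zs x)" by (rule always_eventually) (use zs in \<open>auto intro: less_imp_le\<close>)
  qed
  moreover have "(\<lambda>n. f (zs n)) \<longlonglongrightarrow> \<zeta>"
  proof -
    have la: "(\<lambda>n. inverse (real n + 1)) \<longlonglongrightarrow> 0"
      using LIMSEQ_inverse_real_of_nat by (simp add: add.commute)
    have lb: "\<forall>\<^sub>F n in sequentially. norm (dist (f (zs n)) \<zeta>) \<le> inverse (real n + 1)"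
      by (rule always_eventually) (use zs in \<open>auto intro: less_imp_le\<close>)
    have "(\<lambda>n. dist (f (zs n)) \<zeta>) \<longlonglongrightarrow> 0"
      by (rule Lim_null_comparison[OF lb la])
    then show ?thesis using tendsto_dist_iff by blast
  qed
  ultimately show ?thesis unfolding cluster_inf_def by blast
qed

lemma B_closed:
  fixes f :: "complex \<Rightarrow> complex"
  assumes cont: "continuous_on UNIV f" and S: "closed S"
  shows "closed (f ` S \<union> cluster_inf f)"
proof -
  have "w \<in> f ` S \<union> cluster_inf f" if w: "w \<in> closure (f ` S \<union> cluster_inf f)" for w
  proof (cases "w \<in> cluster_inf f")
    case False
    have "\<exists>n::nat. w \<notin> closure (f ` {z. real n < norm z})"
    proof (rule ccontr)
      assume "\<not> ?thesis"
      then have "w \<in> cluster_inf f" by (intro cluster_sup) simp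
      then show False using False by simp
    qed
    then obtain n::nat where n: "w \<notin> closure (f ` {z. real n < norm z})" by blast
    have sub: "f ` S \<union> cluster_inf f \<subseteq> f ` (S \<inter> cball 0 n) \<union> closure (f ` {z. real n < norm z})"
    proof
      fix x assume x: "x \<in> f ` S \<union> cluster_inf f"
      show "x \<in> f ` (S \<inter> cball 0 n) \<union> closure (f ` {z. real n < norm z})"
      proof (cases "x \<in> cluster_inf f")
        case True then show ?thesis by (rule UnI2[OF cluster_sub])
      next
        case False
        then obtain z where z: "z \<in> S" "x = f z" using x by blast
        show ?thesis
        proof (cases "norm z \<le> n")
          case True then have "z \<in> S \<inter> cball 0 n" using z by simp
          then have "x \<in> f ` (S \<inter> cball 0 n)" using z by blast
          then show ?thesis by (rule UnI1)
        next
          case False then have "x \<in> f ` {z. real n < norm z}" using z by simp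
          then have "x \<in> closure (f ` {z. real n < norm z})" by (rule subsetD[OF closure_subset])
          then show ?thesis by (rule UnI2)
        qed
      qed
    qed
    have "compact (f ` (S \<inter> cball 0 n))"
      by (rule compact_continuous_image[OF continuous_on_subset[OF cont subset_UNIV] closed_Int_compact[OF S compact_cball]])
    then have "closed (f ` (S \<inter> cball 0 n) \<union> closure (f ` {z. real n < norm z}))"
      by (rule closed_Un[OF compact_imp_closed closed_closure])
    then have "w \<in> f ` (S \<inter> cball 0 n) \<union> closure (f ` {z. real n < norm z})"
      using closure_minimal[OF sub] w by (meson subsetD)
    then show ?thesis using n by blast
  qed simp
  then have "closure (f ` S \<union> cluster_inf f) \<subseteq> f ` S \<union> cluster_inf f" by (rule subsetI)
  then show ?thesis by (metis closure_subset_eq closure_subset subset_antisym)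
qed



lemma critset_closed:
  assumes h: "harmonic_complex f"
  shows "closed (critset f)"
proof -
  have "isCont (jacobian f) x" for x
    unfolding jacobian_def using harm_diff(3-6)[OF h]
    by (intro continuous_intros) (auto intro: differentiable_imp_continuous_within)
  then have "continuous_on UNIV (jacobian f)" by (simp add: continuous_at_imp_continuous_on)
  then show ?thesis unfolding critset_def
    using closed_Collect_eq[of "jacobian f" "\<lambda>_. 0"] by simp
qed

theorem lemma5p15:
  fixes f :: "complex \<Rightarrow> complex" and R \<Omega> :: "complex set" and w0 :: complex
  assumes "harmonic_complex f"
    and "light f"
    and "R \<in> components (UNIV - f -` (f ` critset f \<union> cluster_inf f))"
    and "bounded R"
    and "\<Omega> \<in> components (UNIV - (f ` critset f \<union> cluster_inf f))"
    and "f ` R = \<Omega>"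
    and "w0 \<in> frontier \<Omega>"
    and "\<exists>e>0. ball w0 e \<inter> frontier \<Omega> = {w0}"
    and "f -` {w0} \<inter> frontier R \<inter> critset f = {}"
  shows "ecount (f -` {w0} \<inter> frontier R) = Val f R \<Omega>
    \<and> (\<forall>z \<in> f -` {w0} \<inter> frontier R. \<exists>e>0. ball z e \<inter> frontier R = {z})"
proof -
  note h = assms(1)
  define B where "B = f ` critset f \<union> cluster_inf f"
  define G where "G = UNIV - f -` B"
  have Rc: "R \<in> components G" using assms(3) unfolding G_def B_def .
  have Oc: "\<Omega> \<in> components (UNIV - B)" using assms(5) unfolding B_def .
  have cont: "continuous_on UNIV f" by (rule harm_cont[OF h])
  have isc: "isCont f x" for x using cont by (simp add: continuous_on_eq_continuous_at)
  have Bcl: "closed B" unfolding B_def by (rule B_closed[OF cont critset_closed[OF h]])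
  have "closed (f -` B)" using continuous_closed_vimage[OF Bcl] isc by blast
  then have Gop: "open G" unfolding G_def by (simp add: Compl_eq_Diff_UNIV[symmetric] open_Compl)
  have Rop: "open R" by (rule open_components[OF Gop Rc])
  have RG: "R \<subseteq> G" by (rule in_components_subset[OF Rc])
  have Oop: "open \<Omega>" by (rule open_components[OF _ Oc]) (use Bcl in \<open>simp add: Compl_eq_Diff_UNIV[symmetric] open_Compl\<close>)
  have OB: "\<Omega> \<subseteq> UNIV - B" by (rule in_components_subset[OF Oc])
  have Ocon: "connected \<Omega>" by (rule in_components_connected[OF Oc])
  have One: "\<Omega> \<noteq> {}" by (rule in_components_nonempty[OF Oc])
  have maxR: "T \<subseteq> R" if "connected T" "T \<subseteq> G" "R \<inter> T \<noteq> {}" for T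
    using components_maximal[OF Rc that] .
  have Ginj: "\<exists>r>0. inj_on f (ball x r)" if "x \<in> G" for x
  proof -
    have "x \<notin> critset f" using that unfolding G_def B_def by auto
    then show ?thesis using harm_locinj[OF h] unfolding critset_def by auto
  qed
  have w0O: "w0 \<notin> \<Omega>" using assms(7) Oop by (simp add: frontier_def interior_open)
  obtain e where e: "e > 0" "ball w0 e \<inter> frontier \<Omega> = {w0}" using assms(8) by blast
  have Dsub: "ball w0 e - {w0} \<subseteq> \<Omega>"
  proof (rule ccontr)
    assume nsub: "\<not> ?thesis"
    have "w0 \<in> closure \<Omega>" using assms(7) by (simp add: frontier_def)
    then obtain y where y: "y \<in> \<Omega>" "dist y w0 < e" using e(1) unfolding closure_approachable by blast
    then have "y \<in> (ball w0 e - {w0}) \<inter> \<Omega>" using w0O by (auto simp: dist_commute)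
    then have i1: "(ball w0 e - {w0}) \<inter> \<Omega> \<noteq> {}" by blast
    have i2: "(ball w0 e - {w0}) - \<Omega> \<noteq> {}" using nsub by blast
    have "(ball w0 e - {w0}) \<inter> frontier \<Omega> \<noteq> {}"
      by (rule connected_Int_frontier[OF connected_punctured_ball i1 i2]) simp
    then show False using e(2) by auto
  qed
  have Kc: "compact (closure R)" using assms(4) by (simp add: compact_closure)
  have frR: "frontier R = closure R - R" using Rop by (simp add: frontier_def interior_open)
  have clR: "x \<in> R" if xc: "x \<in> closure R" and fx: "f x \<in> \<Omega>" for x
  proof -
    have "x \<in> G" using fx OB unfolding G_def by auto
    then obtain r where r: "r > 0" "ball x r \<subseteq> G" using Gop open_contains_ball by blast
    obtain y where "y \<in> R" "dist y x < r" using xc[unfolded closure_approachable] r(1) by blast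
    then have "R \<inter> ball x r \<noteq> {}" by (auto simp: dist_commute)
    then have "ball x r \<subseteq> R" using maxR[OF connected_ball r(2)] by blast
    then show ?thesis using r(1) by auto
  qed
  define n where "n = (\<lambda>w. card (f -` {w} \<inter> R))"
  have locO: "finite (f -` {w} \<inter> R) \<and> (\<exists>\<delta>>0. \<forall>w'\<in>ball w \<delta> \<inter> \<Omega>. n w' = n w)" if "w \<in> \<Omega>" for w
  proof -
    have Y: "f -` {w} \<inter> closure R = f -` {w} \<inter> R" using clR that closure_subset by fastforce
    have loc: "\<exists>r>0. inj_on f (ball y r) \<and> ball y r - {y} \<subseteq> R" if "y \<in> f -` {w} \<inter> closure R" for y
    proof -
      have "y \<in> R" using that Y by auto
      obtain r1 where r1: "r1 > 0" "inj_on f (ball y r1)" using Ginj \<open>y \<in> R\<close> RG by blast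
      obtain r2 where r2: "r2 > 0" "ball y r2 \<subseteq> R" using Rop \<open>y \<in> R\<close> open_contains_ball by blast
      show ?thesis using r1 r2
        by (intro exI[of _ "min r1 r2"]) (auto intro: inj_on_subset)
    qed
    from count_near[OF cont Kc closure_subset refl loc]
    obtain \<delta> where fin: "finite (f -` {w} \<inter> closure R)" and \<delta>: "\<delta> > 0"
      "\<forall>w'\<in>ball w \<delta> - {w}. finite (f -` {w'} \<inter> R) \<and> card (f -` {w'} \<inter> R) = card (f -` {w} \<inter> closure R)"
      by blast
    have "n w' = n w" if w'': "w' \<in> ball w \<delta> \<inter> \<Omega>" for w'
    proof (cases "w' = w")
      case False
      then have "w' \<in> ball w \<delta> - {w}" using w'' by blast
      then have "card (f -` {w'} \<inter> R) = card (f -` {w} \<inter> closure R)" using \<delta>(2) by blast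
      then show ?thesis unfolding n_def Y .
    qed simp
    moreover have "finite (f -` {w} \<inter> R)" using fin unfolding Y .
    ultimately show ?thesis using \<delta>(1) by blast
  qed
  have nconst: "n constant_on \<Omega>"
  proof (rule locally_constant_imp_constant[OF Ocon])
    fix a assume "a \<in> \<Omega>"
    then obtain \<delta> where "\<delta> > 0" "\<forall>w'\<in>ball a \<delta> \<inter> \<Omega>. n w' = n a" using locO[OF \<open>a \<in> \<Omega>\<close>] by blast
    moreover have "openin (top_of_set \<Omega>) (ball a \<delta> \<inter> \<Omega>)"
      by (rule open_openin_trans[OF Oop open_Int[OF open_ball Oop]]) blast
    moreover have "a \<in> ball a \<delta> \<inter> \<Omega>" using \<open>\<delta> > 0\<close> \<open>a \<in> \<Omega>\<close> by simp
    ultimately show "\<exists>T. openin (top_of_set \<Omega>) T \<and> a \<in> T \<and> (\<forall>x\<in>T. n x = n a)"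
      by blast
  qed
  define P where "P = f -` {w0} \<inter> frontier R"
  have P: "P = f -` {w0} \<inter> closure R"
  proof -
    have "f -` {w0} \<inter> R = {}" using assms(6) w0O by blast
    then show ?thesis unfolding P_def frR by auto
  qed
  have locP: "\<exists>r>0. inj_on f (ball y r) \<and> ball y r - {y} \<subseteq> R" if yc: "y \<in> f -` {w0} \<inter> closure R" for y
  proof -
    have yP: "y \<in> P" using that P by auto
    then have "jacobian f y \<noteq> 0" using assms(9) unfolding P_def critset_def by auto
    then obtain r1 where r1: "r1 > 0" "inj_on f (ball y r1)" using harm_locinj[OF h] by blast
    have "f y = w0" using that by auto
    obtain r2 where r2: "r2 > 0" "\<And>x. dist x y < r2 \<Longrightarrow> dist (f x) w0 < e"
      using isc[of y] e(1) \<open>f y = w0\<close> unfolding continuous_at_eps_delta by blast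
    define r where "r = min r1 r2"
    have rp: "r > 0" using r1 r2 r_def by auto
    have injr: "inj_on f (ball y r)" using r1(2) r_def by (auto intro: inj_on_subset)
    have "ball y r - {y} \<subseteq> G"
    proof
      fix x assume x: "x \<in> ball y r - {y}"
      then have "f x \<noteq> w0" using injr \<open>f y = w0\<close> rp by (auto dest: inj_onD)
      moreover have "dist (f x) w0 < e" using r2(2)[of x] x r_def by (auto simp: dist_commute)
      ultimately have "f x \<in> \<Omega>" using Dsub by (auto simp: dist_commute)
      then show "x \<in> G" using OB unfolding G_def by auto
    qed
    moreover have "R \<inter> (ball y r - {y}) \<noteq> {}"
    proof -
      have "y \<in> closure R" using yc by blast
      then obtain x where "x \<in> R" "dist x y < r" using rp unfolding closure_approachable by blast
      moreover have "y \<notin> R" using yP unfolding P_def frR by auto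
      ultimately show ?thesis by (auto simp: dist_commute)
    qed
    ultimately have "ball y r - {y} \<subseteq> R" using maxR[OF connected_punctured_ball] by auto
    then show ?thesis using rp injr by blast
  qed
  from count_near[OF cont Kc closure_subset refl locP]
  obtain \<delta> where finP: "finite P" and \<delta>: "\<delta> > 0"
      "\<forall>w'\<in>ball w0 \<delta> - {w0}. finite (f -` {w'} \<inter> R) \<and> card (f -` {w'} \<inter> R) = card P"
    unfolding P by blast
  define w' where "w' = w0 + of_real (min \<delta> e / 2)"
  have w'b: "w' \<in> ball w0 \<delta> - {w0}" "w' \<in> ball w0 e - {w0}"
    using \<delta>(1) e(1) by (auto simp: w'_def dist_norm)
  have w'O: "w' \<in> \<Omega>" using w'b Dsub by auto
  have nw': "n w' = card P" using \<delta>(2) w'b unfolding n_def by blast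
  have "ecount {z \<in> R. f z = w} = enat (card P)" if "w \<in> \<Omega>" for w
  proof -
    have "{z \<in> R. f z = w} = f -` {w} \<inter> R" by auto
    moreover have "n w = n w'" using nconst that w'O unfolding constant_on_def by metis
    ultimately show ?thesis using locO[OF that] nw' unfolding ecount_def n_def by auto
  qed
  then have "Val f R \<Omega> = enat (card P)" unfolding Val_def using One by simp
  moreover have "ecount P = enat (card P)" using finP by (simp add: ecount_def)
  moreover have "\<forall>z \<in> P. \<exists>e>0. ball z e \<inter> frontier R = {z}"
  proof
    fix z assume zP: "z \<in> P"
    then obtain r where r: "r > 0" "ball z r - {z} \<subseteq> R" using locP P by blast
    have "ball z r \<inter> frontier R = {z}" using r zP unfolding P_def frR by auto
    then show "\<exists>e>0. ball z e \<inter> frontier R = {z}" using r(1) by blast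
  qed
  ultimately show ?thesis unfolding P_def by simp
qed

end
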